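(* Let $X_1,\dots,X_n$ be i.i.d. $\mathsf{Bernoulli}(p)$ with $p\in[\frac12,1)$, and let $Y_k=X_k\oplus V_k$ for $k=1,\dots,n$, where $V_1,\dots,V_n$ are i.i.d. $\mathsf{Bernoulli}(\alpha)$, independent of $X^n$, with $\alpha\in[0,\frac12)$ and $\bar\alpha>p$. Let $q=\alpha\bar p+\bar\alpha p$ and $\zeta(\varepsilon)=\frac{\bar\alpha\bar p+\bar\alpha p-\varepsilon}{\bar\alpha p-\alpha\bar p}$. Then for all $\varepsilon\in[p,\bar\alpha]$, $$\mathcal{h}^{\mathsf i}_n(\varepsilon)=1-\zeta(\varepsilon)q.$$
   Context: $\bar a=1-a$; $\oplus$ is addition mod 2. $\mathsf{P}_{\mathsf{c}}(X^n|Z^n)=\sum_{z^n}\max_{x^n}P_{X^nZ^n}(x^n,z^n)$. $\mathcal{h}^{\mathsf i}_n(\varepsilon)=\sup\mathsf{P}_{\mathsf{c}}^{1/n}(Y^n|Z^n)$, where the supremum is over all memoryless privacy filters of the form $P_{Z^n|Y^n}(z^n|y^n)=\prod_{k=1}^n\mathsf{W}(z_k|y_k)$ for $y^n,z^n\in\{0,1\}^n$, with $\mathsf{W}$ a single channel from $\{0,1\}$ to $\{0,1\}$ (with $Z^n$ generated from $Y^n$ only, so $X^n - Y^n - Z^n$), satisfying $\mathsf{P}_{\mathsf{c}}^{1/n}(X^n|Z^n)\le\varepsilon$. *)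

theory Defs
  imports Complex_Main
begin

text \<open>Binary strings of length n are bool lists (True = 1). Bernoulli pmf.\<close>
definition bern :: "real \<Rightarrow> bool \<Rightarrow> real" where
  "bern p b = (if b then p else 1 - p)"

definition strings :: "nat \<Rightarrow> bool list set" where
  "strings n = {xs. length xs = n}"

definition PXY :: "real \<Rightarrow> real \<Rightarrow> bool \<Rightarrow> bool \<Rightarrow> real" where
  "PXY p \<alpha> x y = bern p x * bern \<alpha> (x \<noteq> y)"

definition PXYn :: "real \<Rightarrow> real \<Rightarrow> bool list \<Rightarrow> bool list \<Rightarrow> real" where
  "PXYn p \<alpha> xs ys = (\<Prod>k<length xs. PXY p \<alpha> (xs ! k) (ys ! k))"

text \<open>A channel W from {0,1} to {0,1}: W y z = W(z|y).\<close>
definition channel :: "(bool \<Rightarrow> bool \<Rightarrow> real) \<Rightarrow> bool" where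
  "channel W \<longleftrightarrow> (\<forall>y z. 0 \<le> W y z) \<and> (\<forall>y. W y True + W y False = 1)"

definition Wn :: "(bool \<Rightarrow> bool \<Rightarrow> real) \<Rightarrow> bool list \<Rightarrow> bool list \<Rightarrow> real" where
  "Wn W ys zs = (\<Prod>k<length ys. W (ys ! k) (zs ! k))"

definition PXZn :: "real \<Rightarrow> real \<Rightarrow> (bool \<Rightarrow> bool \<Rightarrow> real) \<Rightarrow> nat \<Rightarrow> bool list \<Rightarrow> bool list \<Rightarrow> real" where
  "PXZn p \<alpha> W n xs zs = (\<Sum>ys\<in>strings n. PXYn p \<alpha> xs ys * Wn W ys zs)"

definition PYZn :: "real \<Rightarrow> real \<Rightarrow> (bool \<Rightarrow> bool \<Rightarrow> real) \<Rightarrow> nat \<Rightarrow> bool list \<Rightarrow> bool list \<Rightarrow> real" where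
  "PYZn p \<alpha> W n ys zs = (\<Sum>xs\<in>strings n. PXYn p \<alpha> xs ys * Wn W ys zs)"

definition Pc :: "nat \<Rightarrow> (bool list \<Rightarrow> bool list \<Rightarrow> real) \<Rightarrow> real" where
  "Pc n P = (\<Sum>zs\<in>strings n. Max ((\<lambda>xs. P xs zs) ` strings n))"

definition hi :: "nat \<Rightarrow> real \<Rightarrow> real \<Rightarrow> real \<Rightarrow> real" where
  "hi n p \<alpha> \<epsilon> = Sup {Pc n (PYZn p \<alpha> W n) powr (1 / real n) | W.
      channel W \<and> Pc n (PXZn p \<alpha> W n) powr (1 / real n) \<le> \<epsilon>}"

end

theory Submission imports Defs begin

lemma finite_strings: "finite (strings n)"
proof -
  have "strings n = {xs. set xs \<subseteq> (UNIV::bool set) \<and> length xs = n}" by (auto simp: strings_def)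
  thus ?thesis using finite_lists_length_eq[of "UNIV::bool set" n] by simp
qed

lemma strings_Suc: "strings (Suc n) = Cons True ` strings n \<union> Cons False ` strings n"
  by (auto simp: strings_def length_Suc_conv)

lemma sum_prod_strings:
  fixes F :: "nat \<Rightarrow> bool \<Rightarrow> real"
  shows "(\<Sum>ys\<in>strings n. \<Prod>k<n. F k (ys!k)) = (\<Prod>k<n. F k True + F k False)"
proof (induction n arbitrary: F)
  case 0
  then show ?case by (simp add: strings_def)
next
  case (Suc n)
  have shift: "(\<Sum>ys\<in>Cons b ` strings n. \<Prod>k<Suc n. F k (ys!k)) = (\<Sum>ys\<in>strings n. F 0 b * (\<Prod>k<n. F (Suc k) (ys!k)))" for b
  proof -
    have "(\<Sum>ys\<in>Cons b ` strings n. \<Prod>k<Suc n. F k (ys!k)) = (\<Sum>ys\<in>strings n. \<Prod>k<Suc n. F k ((b#ys)!k))"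
      by (subst sum.reindex) (auto simp only: inj_on_def list.inject o_def)
    also have "\<dots> = (\<Sum>ys\<in>strings n. F 0 b * (\<Prod>k<n. F (Suc k) (ys!k)))"
      by (simp only: prod.lessThan_Suc_shift nth_Cons_0 nth_Cons_Suc)
    finally show ?thesis .
  qed
  have d: "Cons True ` strings n \<inter> Cons False ` strings n = {}" by auto
  have "(\<Sum>ys\<in>strings (Suc n). \<Prod>k<Suc n. F k (ys!k))
     = (\<Sum>ys\<in>Cons True ` strings n. \<Prod>k<Suc n. F k (ys!k)) + (\<Sum>ys\<in>Cons False ` strings n. \<Prod>k<Suc n. F k (ys!k))"
    unfolding strings_Suc by (rule sum.union_disjoint) (auto simp: finite_strings)
  also have "\<dots> = (\<Sum>ys\<in>strings n. F 0 True * (\<Prod>k<n. F (Suc k) (ys!k))) + (\<Sum>ys\<in>strings n. F 0 False * (\<Prod>k<n. F (Suc k) (ys!k)))"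
    by (simp only: shift)
  also have "\<dots> = F 0 True * (\<Prod>k<n. F (Suc k) True + F (Suc k) False) + F 0 False * (\<Prod>k<n. F (Suc k) True + F (Suc k) False)"
    using Suc.IH[of "\<lambda>k. F (Suc k)"] by (metis (no_types) sum_distrib_left)
  also have "\<dots> = (\<Prod>k<Suc n. F k True + F k False)"
    by (simp only: prod.lessThan_Suc_shift) (simp add: algebra_simps)
  finally show ?case .
qed

lemma max_prod_strings:
  fixes F :: "nat \<Rightarrow> bool \<Rightarrow> real"
  assumes "\<And>k b. 0 \<le> F k b"
  shows "Max ((\<lambda>xs. \<Prod>k<n. F k (xs!k)) ` strings n) = (\<Prod>k<n. max (F k True) (F k False))"
proof (rule Max_eqI)
  show "finite ((\<lambda>xs. \<Prod>k<n. F k (xs!k)) ` strings n)" by (simp add: finite_strings)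
next
  fix y assume "y \<in> (\<lambda>xs. \<Prod>k<n. F k (xs!k)) ` strings n"
  then obtain xs where y: "y = (\<Prod>k<n. F k (xs!k))" by auto
  have le: "F k (xs!k) \<le> max (F k True) (F k False)" for k by (cases "xs!k") auto
  show "y \<le> (\<Prod>k<n. max (F k True) (F k False))" unfolding y
    by (intro prod_mono conjI assms le)
next
  let ?xs = "map (\<lambda>k. F k False \<le> F k True) [0..<n]"
  have 1: "?xs \<in> strings n" by (simp add: strings_def)
  have 2: "(\<Prod>k<n. F k (?xs!k)) = (\<Prod>k<n. max (F k True) (F k False))"
  proof (rule prod.cong[OF refl])
    fix k assume "k \<in> {..<n}"
    hence "?xs!k = (F k False \<le> F k True)" by simp
    thus "F k (?xs!k) = max (F k True) (F k False)"
      by (cases "F k False \<le> F k True") (auto simp: max_def)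
  qed
  show "(\<Prod>k<n. max (F k True) (F k False)) \<in> (\<lambda>xs. \<Prod>k<n. F k (xs!k)) ` strings n"
    using 1 2[symmetric] by (rule rev_image_eqI)
qed

lemma Pc_prod:
  fixes g :: "bool \<Rightarrow> bool \<Rightarrow> real"
  assumes g0: "\<And>x z. 0 \<le> g x z"
    and P: "\<And>xs zs. xs \<in> strings n \<Longrightarrow> zs \<in> strings n \<Longrightarrow> P xs zs = (\<Prod>k<n. g (xs!k) (zs!k))"
  shows "Pc n P = (max (g True True) (g False True) + max (g True False) (g False False)) ^ n"
proof -
  have "Pc n P = (\<Sum>zs\<in>strings n. \<Prod>k<n. max (g True (zs!k)) (g False (zs!k)))"
    unfolding Pc_def
  proof (rule sum.cong[OF refl])
    fix zs assume zs: "zs \<in> strings n"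
    have "(\<lambda>xs. P xs zs) ` strings n = (\<lambda>xs. \<Prod>k<n. g (xs!k) (zs!k)) ` strings n"
      by (rule image_cong[OF refl]) (simp add: P zs)
    also have "Max \<dots> = (\<Prod>k<n. max (g True (zs!k)) (g False (zs!k)))"
      by (rule max_prod_strings) (rule g0)
    finally show "Max ((\<lambda>xs. P xs zs) ` strings n) = (\<Prod>k<n. max (g True (zs!k)) (g False (zs!k)))" .
  qed
  also have "\<dots> = (\<Prod>k<n. max (g True True) (g False True) + max (g True False) (g False False))"
    by (rule sum_prod_strings)
  finally show ?thesis by simp
qed


definition gX :: "real \<Rightarrow> real \<Rightarrow> (bool \<Rightarrow> bool \<Rightarrow> real) \<Rightarrow> bool \<Rightarrow> bool \<Rightarrow> real" where
  "gX p a W x z = PXY p a x True * W True z + PXY p a x False * W False z"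

definition gY :: "real \<Rightarrow> real \<Rightarrow> (bool \<Rightarrow> bool \<Rightarrow> real) \<Rightarrow> bool \<Rightarrow> bool \<Rightarrow> real" where
  "gY p a W y z = PXY p a True y * W y z + PXY p a False y * W y z"

definition c1 :: "(bool \<Rightarrow> bool \<Rightarrow> real) \<Rightarrow> real" where
  "c1 g = max (g True True) (g False True) + max (g True False) (g False False)"

lemma PXZn_eq:
  assumes "xs \<in> strings n" "zs \<in> strings n"
  shows "PXZn p a W n xs zs = (\<Prod>k<n. gX p a W (xs!k) (zs!k))"
proof -
  have "PXZn p a W n xs zs = (\<Sum>ys\<in>strings n. \<Prod>k<n. PXY p a (xs!k) (ys!k) * W (ys!k) (zs!k))"
    unfolding PXZn_def
    by (rule sum.cong[OF refl]) (use assms in \<open>simp add: PXYn_def Wn_def prod.distrib strings_def\<close>)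
  also have "\<dots> = (\<Prod>k<n. gX p a W (xs!k) (zs!k))"
    by (simp add: sum_prod_strings[of "\<lambda>k b. PXY p a (xs!k) b * W b (zs!k)"] gX_def)
  finally show ?thesis .
qed

lemma PYZn_eq:
  assumes "ys \<in> strings n" "zs \<in> strings n"
  shows "PYZn p a W n ys zs = (\<Prod>k<n. gY p a W (ys!k) (zs!k))"
proof -
  have "PYZn p a W n ys zs = (\<Sum>xs\<in>strings n. \<Prod>k<n. PXY p a (xs!k) (ys!k) * W (ys!k) (zs!k))"
    unfolding PYZn_def
    by (rule sum.cong[OF refl]) (use assms in \<open>simp add: PXYn_def Wn_def prod.distrib strings_def\<close>)
  also have "\<dots> = (\<Prod>k<n. gY p a W (ys!k) (zs!k))"
    by (simp add: sum_prod_strings[of "\<lambda>k b. PXY p a b (ys!k) * W (ys!k) (zs!k)"] gY_def)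
  finally show ?thesis .
qed

lemma pow_powr_inv:
  fixes c :: real
  assumes "0 \<le> c" "n \<ge> 1"
  shows "(c ^ n) powr (1 / real n) = c"
proof -
  have "(c ^ n) powr (1 / real n) = root n (c ^ n)"
    using assms by (simp add: root_powr_inverse)
  also have "\<dots> = c" using assms by (simp add: real_root_power_cancel)
  finally show ?thesis .
qed

lemma PXY_nonneg: "0 \<le> p \<Longrightarrow> p \<le> 1 \<Longrightarrow> 0 \<le> a \<Longrightarrow> a \<le> 1 \<Longrightarrow> 0 \<le> PXY p a x y"
  by (simp add: PXY_def bern_def)

lemma hi_eq:
  assumes "n \<ge> 1" "0 \<le> p" "p \<le> 1" "0 \<le> a" "a \<le> 1"
  shows "hi n p a e = Sup {c1 (gY p a W) | W. channel W \<and> c1 (gX p a W) \<le> e}"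
proof -
  have *: "Pc n (PYZn p a W n) powr (1 / real n) = c1 (gY p a W) \<and>
           Pc n (PXZn p a W n) powr (1 / real n) = c1 (gX p a W)" if W: "channel W" for W
  proof -
    have W0: "0 \<le> W y z" for y z using W by (simp add: channel_def)
    have gX0: "0 \<le> gX p a W x z" for x z
      unfolding gX_def using PXY_nonneg[OF assms(2-5)] W0 by (simp add: add_nonneg_nonneg mult_nonneg_nonneg)
    have gY0: "0 \<le> gY p a W x z" for x z
      unfolding gY_def using PXY_nonneg[OF assms(2-5)] W0 by (simp add: add_nonneg_nonneg mult_nonneg_nonneg)
    have "Pc n (PXZn p a W n) = c1 (gX p a W) ^ n"
      unfolding c1_def by (rule Pc_prod) (use gX0 PXZn_eq in auto)
    moreover have "Pc n (PYZn p a W n) = c1 (gY p a W) ^ n"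
      unfolding c1_def by (rule Pc_prod) (use gY0 PYZn_eq in auto)
    moreover have "0 \<le> c1 (gX p a W)" "0 \<le> c1 (gY p a W)"
      unfolding c1_def using gX0 gY0 by (auto intro: add_nonneg_nonneg simp: le_max_iff_disj)
    ultimately show ?thesis using pow_powr_inv assms(1) by simp
  qed
  have "{Pc n (PYZn p a W n) powr (1 / real n) | W. channel W \<and> Pc n (PXZn p a W n) powr (1 / real n) \<le> e}
      = {c1 (gY p a W) | W. channel W \<and> c1 (gX p a W) \<le> e}"
  proof (intro Collect_cong iffI)
    fix x assume "\<exists>W. x = Pc n (PYZn p a W n) powr (1 / real n) \<and> channel W \<and> Pc n (PXZn p a W n) powr (1 / real n) \<le> e"
    then obtain W where "x = Pc n (PYZn p a W n) powr (1 / real n)" "channel W" "Pc n (PXZn p a W n) powr (1 / real n) \<le> e" by blast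
    thus "\<exists>W. x = c1 (gY p a W) \<and> channel W \<and> c1 (gX p a W) \<le> e" using *[of W] by auto
  next
    fix x assume "\<exists>W. x = c1 (gY p a W) \<and> channel W \<and> c1 (gX p a W) \<le> e"
    then obtain W where "x = c1 (gY p a W)" "channel W" "c1 (gX p a W) \<le> e" by blast
    thus "\<exists>W. x = Pc n (PYZn p a W n) powr (1 / real n) \<and> channel W \<and> Pc n (PXZn p a W n) powr (1 / real n) \<le> e" using *[of W] by (intro exI[of _ W]) auto
  qed
  thus ?thesis unfolding hi_def by simp
qed


lemma key_case:
  fixes p a q :: real
  assumes W: "channel W" and p: "1/2 \<le> p" and a: "0 \<le> a" "a \<le> 1" and that: "q = a*(1-p)+(1-a)*p"
  shows "q * (gX p a W g1 True + gX p a W g0 False) \<ge> q*(1-a) - (1 - (gY p a W g1 True + gY p a W g0 False))*(p-a)"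
proof -
  define w1 where "w1 = W True True"
  define w0 where "w0 = W False True"
  have WTF: "W True False = 1 - w1" and WFF: "W False False = 1 - w0"
    using W unfolding channel_def w1_def w0_def by (metis add_diff_cancel_left')+
  have w0: "0 \<le> w0" "w0 \<le> 1" using W WFF unfolding channel_def w0_def by (metis diff_ge_0_iff_ge)+
  define c where "c = 2*a*(1-a)*(2*p-1)"
  have c: "0 \<le> c" unfolding c_def using p a by (intro mult_nonneg_nonneg) auto
  have e: "q * (gX p a W g1 True + gX p a W g0 False) - (q*(1-a) - (1 - (gY p a W g1 True + gY p a W g0 False))*(p-a))
     = (if g1 then (if g0 then 1 else w0) else (if g0 then 1 - w0 else 0)) * c"
    unfolding that
    apply (cases g1; cases g0)
       apply (simp_all add: gX_def gY_def PXY_def bern_def WTF WFF c_def flip: w1_def w0_def)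
       apply algebra+
    done
  have "0 \<le> (if g1 then (if g0 then 1 else w0) else (if g0 then 1 - w0 else 0)) * c"
    using c w0 by (intro mult_nonneg_nonneg) auto
  with e show ?thesis by linarith
qed


lemma key:
  fixes p a q :: real
  assumes W: "channel W" and p: "1/2 \<le> p" "p \<le> 1" and a: "0 \<le> a" "a \<le> 1" and q: "q = a*(1-p)+(1-a)*p"
  shows "q * c1 (gX p a W) \<ge> q*(1-a) - (1 - c1 (gY p a W))*(p-a)"
proof -
  define g1 where "g1 = (gY p a W False True \<le> gY p a W True True)"
  define g0 where "g0 = (gY p a W False False \<le> gY p a W True False)"
  have m1: "max (gY p a W True True) (gY p a W False True) = gY p a W g1 True"
    unfolding g1_def by (cases "gY p a W False True = gY p a W True True") (auto simp: max_def)
  have m0: "max (gY p a W True False) (gY p a W False False) = gY p a W g0 False"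
    unfolding g0_def by (cases "gY p a W False False = gY p a W True False") (auto simp: max_def)
  have cy: "c1 (gY p a W) = gY p a W g1 True + gY p a W g0 False"
    unfolding c1_def m1 m0 ..
  have x1: "gX p a W g1 True \<le> max (gX p a W True True) (gX p a W False True)"
    by (cases g1) auto
  have x0: "gX p a W g0 False \<le> max (gX p a W True False) (gX p a W False False)"
    by (cases g0) auto
  have cx: "gX p a W g1 True + gX p a W g0 False \<le> c1 (gX p a W)"
    unfolding c1_def using x1 x0 by linarith
  have q0: "0 \<le> q" unfolding q using p a by (intro add_nonneg_nonneg mult_nonneg_nonneg) auto
  have "q * (gX p a W g1 True + gX p a W g0 False) \<le> q * c1 (gX p a W)"
    by (rule mult_left_mono[OF cx q0])
  moreover have "q * (gX p a W g1 True + gX p a W g0 False) \<ge> q*(1-a) - (1 - c1 (gY p a W))*(p-a)"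
    unfolding cy by (rule key_case[OF W p(1) a q])
  ultimately show ?thesis by linarith
qed

theorem proposition2:
  fixes n :: nat and p \<alpha> \<epsilon> :: real
  assumes "n \<ge> 1"
    and "1/2 \<le> p" and "p < 1"
    and "0 \<le> \<alpha>" and "\<alpha> < 1/2" and "1 - \<alpha> > p"
    and "p \<le> \<epsilon>" and "\<epsilon> \<le> 1 - \<alpha>"
  shows "hi n p \<alpha> \<epsilon> =
    1 - ((1 - \<alpha>) * (1 - p) + (1 - \<alpha>) * p - \<epsilon>) / ((1 - \<alpha>) * p - \<alpha> * (1 - p))
        * (\<alpha> * (1 - p) + (1 - \<alpha>) * p)"
proof -
  define q where "q = \<alpha> * (1 - p) + (1 - \<alpha>) * p"
  define r where "r = p - \<alpha>"
  define z where "z = (1 - \<alpha> - \<epsilon>) / r"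
  have r: "0 < r" unfolding r_def using assms by linarith
  have zr: "z * r = 1 - \<alpha> - \<epsilon>" unfolding z_def using r by simp
  have T: "((1 - \<alpha>) * (1 - p) + (1 - \<alpha>) * p - \<epsilon>) / ((1 - \<alpha>) * p - \<alpha> * (1 - p)) * q = z * q"
  proof -
    have "(1 - \<alpha>) * (1 - p) + (1 - \<alpha>) * p - \<epsilon> = 1 - \<alpha> - \<epsilon>" by algebra
    moreover have "(1 - \<alpha>) * p - \<alpha> * (1 - p) = r" unfolding r_def by algebra
    ultimately show ?thesis unfolding z_def by simp
  qed
  have z0: "0 \<le> z" unfolding z_def using r assms by simp
  have z1: "z \<le> 1" unfolding z_def using r assms r_def by (simp add: divide_le_eq_1)
  define S where "S = {c1 (gY p \<alpha> W) | W. channel W \<and> c1 (gX p \<alpha> W) \<le> \<epsilon>}"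
  have hi: "hi n p \<alpha> \<epsilon> = Sup S"
    unfolding S_def by (rule hi_eq) (use assms in auto)
  define Ws :: "bool \<Rightarrow> bool \<Rightarrow> real" where
    "Ws y zz = (if y then (if zz then 1 - z else z) else (if zz then 0 else 1))" for y zz
  have chW: "channel Ws" unfolding channel_def Ws_def using z0 z1 by auto
  have gXTT: "gX p \<alpha> Ws True True = p*(1-\<alpha>)*(1-z)"
    and gXFT: "gX p \<alpha> Ws False True = (1-p)*\<alpha>*(1-z)"
    and gXTF: "gX p \<alpha> Ws True False = p*(1-\<alpha>)*z + p*\<alpha>"
    and gXFF: "gX p \<alpha> Ws False False = (1-p)*\<alpha>*z + (1-p)*(1-\<alpha>)"
    by (simp_all add: gX_def Ws_def PXY_def bern_def)
  have i1: "p*(1-\<alpha>)*(1-z) - (1-p)*\<alpha>*(1-z) = r * (1 - z)" unfolding r_def by algebra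
  have i2: "p*(1-\<alpha>)*(1-z) + (p*(1-\<alpha>)*z + p*\<alpha>) = p" by (simp add: algebra_simps)
  have i3: "p*(1-\<alpha>)*(1-z) + ((1-p)*\<alpha>*z + (1-p)*(1-\<alpha>)) = 1 - \<alpha> - z * r" unfolding r_def by algebra
  have rz: "0 \<le> r * (1 - z)" using r z1 by simp
  have cxW: "c1 (gX p \<alpha> Ws) \<le> \<epsilon>"
    unfolding c1_def gXTT gXFT gXTF gXFF max_def using i1 i2 i3 rz zr assms by auto
  have gYTT: "gY p \<alpha> Ws True True = q*(1-z)" and gYFF: "gY p \<alpha> Ws False False = 1 - q"
    by (simp_all add: gY_def Ws_def PXY_def bern_def q_def algebra_simps)
  have cyW: "1 - z * q \<le> c1 (gY p \<alpha> Ws)"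
  proof -
    have "gY p \<alpha> Ws True True + gY p \<alpha> Ws False False \<le> c1 (gY p \<alpha> Ws)"
      unfolding c1_def by (intro add_mono) auto
    moreover have "gY p \<alpha> Ws True True + gY p \<alpha> Ws False False = 1 - z * q"
      unfolding gYTT gYFF by algebra
    ultimately show ?thesis by linarith
  qed
  have inS: "c1 (gY p \<alpha> Ws) \<in> S" unfolding S_def using chW cxW by blast
  have ub: "x \<le> 1 - z * q" if "x \<in> S" for x
  proof -
    obtain W where x: "x = c1 (gY p \<alpha> W)" and W: "channel W" and ce: "c1 (gX p \<alpha> W) \<le> \<epsilon>"
      using \<open>x \<in> S\<close> unfolding S_def by blast
    have k: "q * c1 (gX p \<alpha> W) \<ge> q*(1-\<alpha>) - (1 - x)*r"
      unfolding x r_def by (rule key[OF W]) (use assms q_def in auto)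
    have q0: "0 \<le> q" unfolding q_def using assms by (intro add_nonneg_nonneg mult_nonneg_nonneg) auto
    have "q * c1 (gX p \<alpha> W) \<le> q * \<epsilon>" using ce q0 by (rule mult_left_mono)
    with k have "(1 - x) * r \<ge> q * (1 - \<alpha> - \<epsilon>)" by (simp add: algebra_simps)
    also have "q * (1 - \<alpha> - \<epsilon>) = (z * q) * r"
    proof -
      have "q * (1 - \<alpha> - \<epsilon>) = q * (z * r)" by (simp only: zr)
      thus ?thesis by (simp add: algebra_simps)
    qed
    finally have "(z * q) * r \<le> (1 - x) * r" .
    hence "z * q \<le> 1 - x" using r by (simp add: mult_le_cancel_right_pos)
    thus ?thesis by linarith
  qed
  have "Sup S = 1 - z * q"
  proof (rule cSup_eq_non_empty)
    show "S \<noteq> {}" using inS by blast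
    show "\<And>x. x \<in> S \<Longrightarrow> x \<le> 1 - z * q" by (rule ub)
    show "\<And>y. (\<And>x. x \<in> S \<Longrightarrow> x \<le> y) \<Longrightarrow> 1 - z * q \<le> y"
      using inS cyW by force
  qed
  thus ?thesis unfolding hi T[unfolded q_def] q_def .
qed

end
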